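(* Let $\Gamma$ be a connected finite simple graph on $N\ge3$ vertices with minimum degree $d=2$ and $\varepsilon=\frac12$. If there exist distinct vertices $u\sim v\sim w$ with $\deg u=\deg v=2$ and $\deg w=3$, then $\Gamma$ is the $3$-book graph (the book graph on $8$ vertices).
   Context: For a finite simple graph $\Gamma=(V,E)$ without isolated vertices, $\deg v$ is the number of neighbours of $v$ and $\mathcal N(v)=\{w\in V: w\sim v\}$. The normalized Laplacian acts on functions $f:V\to\mathbb R$ by $\Delta f(v)=f(v)-\frac{1}{\deg v}\sum_{w\sim v}f(w)$; its eigenvalues are $0=\lambda_1\le\lambda_2\le\dots\le\lambda_N$, and $\varepsilon:=\min_i|1-\lambda_i|$. $d$ denotes the minimum vertex degree. The $m$-book graph ($m\ge1$) has vertex set $\{x,y,v_1,\dots,v_m,w_1,\dots,w_m\}$ and edges $\{x,v_i\},\{y,w_i\},\{v_i,w_i\}$ for $i=1,\dots,m$. *)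

theory Defs
  imports Complex_Main
begin

definition simple_graph :: "'a set \<Rightarrow> ('a \<Rightarrow> 'a \<Rightarrow> bool) \<Rightarrow> bool" where
  "simple_graph V E \<longleftrightarrow> finite V \<and> (\<forall>x y. E x y \<longrightarrow> x \<in> V \<and> y \<in> V)
     \<and> (\<forall>x y. E x y \<longrightarrow> E y x) \<and> (\<forall>x. \<not> E x x)"

definition connected_graph :: "'a set \<Rightarrow> ('a \<Rightarrow> 'a \<Rightarrow> bool) \<Rightarrow> bool" where
  "connected_graph V E \<longleftrightarrow> (\<forall>x\<in>V. \<forall>y\<in>V. (\<lambda>a b. a \<in> V \<and> b \<in> V \<and> E a b)\<^sup>*\<^sup>* x y)"

definition nbhd :: "'a set \<Rightarrow> ('a \<Rightarrow> 'a \<Rightarrow> bool) \<Rightarrow> 'a \<Rightarrow> 'a set" where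
  "nbhd V E v = {w \<in> V. E v w}"

definition deg :: "'a set \<Rightarrow> ('a \<Rightarrow> 'a \<Rightarrow> bool) \<Rightarrow> 'a \<Rightarrow> nat" where
  "deg V E v = card (nbhd V E v)"

definition min_degree :: "'a set \<Rightarrow> ('a \<Rightarrow> 'a \<Rightarrow> bool) \<Rightarrow> nat" where
  "min_degree V E = Min (deg V E ` V)"

definition norm_laplacian :: "'a set \<Rightarrow> ('a \<Rightarrow> 'a \<Rightarrow> bool) \<Rightarrow> ('a \<Rightarrow> real) \<Rightarrow> 'a \<Rightarrow> real" where
  "norm_laplacian V E f v = f v - (1 / real (deg V E v)) * (\<Sum>w\<in>nbhd V E v. f w)"

text \<open>Eigenvalues of the normalized Laplacian acting on functions V \<rightarrow> R
  (the operator is self-adjoint w.r.t. the degree-weighted inner product,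
  so its spectrum is real).\<close>
definition nlap_eigenvalues :: "'a set \<Rightarrow> ('a \<Rightarrow> 'a \<Rightarrow> bool) \<Rightarrow> real set" where
  "nlap_eigenvalues V E = {mu. \<exists>f. (\<exists>v\<in>V. f v \<noteq> 0) \<and>
      (\<forall>v\<in>V. norm_laplacian V E f v = mu * f v)}"

definition spectral_eps :: "'a set \<Rightarrow> ('a \<Rightarrow> 'a \<Rightarrow> bool) \<Rightarrow> real" where
  "spectral_eps V E = Min ((\<lambda>mu. \<bar>1 - mu\<bar>) ` nlap_eigenvalues V E)"

datatype book_vertex = BX | BY | BV nat | BW nat

definition book_V :: "nat \<Rightarrow> book_vertex set" where
  "book_V m = {BX, BY} \<union> BV ` {1..m} \<union> BW ` {1..m}"

definition book_E :: "nat \<Rightarrow> book_vertex \<Rightarrow> book_vertex \<Rightarrow> bool" where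
  "book_E m a b \<longleftrightarrow> (\<exists>i\<in>{1..m}.
      (a = BX \<and> b = BV i) \<or> (a = BV i \<and> b = BX) \<or>
      (a = BY \<and> b = BW i) \<or> (a = BW i \<and> b = BY) \<or>
      (a = BV i \<and> b = BW i) \<or> (a = BW i \<and> b = BV i))"

definition graph_iso :: "'a set \<Rightarrow> ('a \<Rightarrow> 'a \<Rightarrow> bool) \<Rightarrow> 'b set \<Rightarrow> ('b \<Rightarrow> 'b \<Rightarrow> bool) \<Rightarrow> bool" where
  "graph_iso V E W F \<longleftrightarrow> (\<exists>\<phi>. bij_betw \<phi> V W \<and> (\<forall>x\<in>V. \<forall>y\<in>V. E x y \<longleftrightarrow> F (\<phi> x) (\<phi> y)))"

end

theory Submission
  imports Defs "HOL-Analysis.Analysis"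
begin

locale grph =
  fixes V :: "'a set" and E :: "'a \<Rightarrow> 'a \<Rightarrow> bool"
  assumes sg: "simple_graph V E"
  and dpos: "\<And>z. z \<in> V \<Longrightarrow> 0 < deg V E z"
begin

definition sN :: "('a \<Rightarrow> real) \<Rightarrow> 'a \<Rightarrow> real" where "sN f z = (\<Sum>y\<in>nbhd V E z. f y)"
definition Qf where "Qf f = (\<Sum>z\<in>V. (sN f z)^2 / real (deg V E z))"
definition Nf where "Nf f = (\<Sum>z\<in>V. real (deg V E z) * (f z)^2)"
definition BN where "BN f g = (\<Sum>z\<in>V. real (deg V E z) * f z * g z)"
definition BQ where "BQ f g = (\<Sum>z\<in>V. sN f z * sN g z / real (deg V E z))"

lemma finV: "finite V" using sg by (simp add: simple_graph_def)
lemma EV: "E x y \<Longrightarrow> x \<in> V \<and> y \<in> V" using sg by (simp add: simple_graph_def)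
lemma Esym: "E x y \<Longrightarrow> E y x" using sg by (simp add: simple_graph_def)
lemma Eirr: "\<not> E x x" using sg by (simp add: simple_graph_def)
lemma Esym_iff: "E x y \<longleftrightarrow> E y x" using Esym by blast
lemma nb_sub: "nbhd V E z \<subseteq> V" by (auto simp: nbhd_def)
lemma fin_nb: "finite (nbhd V E z)" using finV nb_sub finite_subset by blast
lemma mem_nb: "y \<in> nbhd V E z \<longleftrightarrow> E z y" using EV by (auto simp: nbhd_def)
lemma dpos': "z \<in> V \<Longrightarrow> real (deg V E z) > 0" using dpos by simp
lemma dge1: "z \<in> V \<Longrightarrow> real (deg V E z) \<ge> 1" using dpos by (simp add: Suc_le_eq)

lemma sN_V: "sN f z = (\<Sum>y\<in>V. if E z y then f y else 0)"
  unfolding sN_def nbhd_def using finV by (simp add: sum.inter_filter)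

lemma sum_sym: "(\<Sum>z\<in>V. sN f z * g z) = (\<Sum>z\<in>V. f z * sN g z)"
proof -
  have "(\<Sum>z\<in>V. sN f z * g z) = (\<Sum>z\<in>V. \<Sum>y\<in>V. if E z y then f y * g z else 0)"
    by (auto simp: sN_V sum_distrib_right intro!: sum.cong)
  also have "\<dots> = (\<Sum>y\<in>V. \<Sum>z\<in>V. if E z y then f y * g z else 0)" by (rule sum.swap)
  also have "\<dots> = (\<Sum>y\<in>V. f y * sN g y)"
    by (auto simp: sN_V sum_distrib_left intro!: sum.cong simp: Esym_iff[of _ z for z])
  finally show ?thesis .
qed

lemma eig_iff: "\<mu> \<in> nlap_eigenvalues V E \<longleftrightarrow>
   (\<exists>f. (\<exists>v\<in>V. f v \<noteq> 0) \<and> (\<forall>v\<in>V. sN f v = (1 - \<mu>) * real (deg V E v) * f v))"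
proof -
  have "\<And>f v. v \<in> V \<Longrightarrow> (norm_laplacian V E f v = \<mu> * f v) \<longleftrightarrow> (sN f v = (1 - \<mu>) * real (deg V E v) * f v)"
  proof -
    fix f v assume v: "v \<in> V"
    have d: "real (deg V E v) > 0" using dpos' v by simp
    show "(norm_laplacian V E f v = \<mu> * f v) \<longleftrightarrow> (sN f v = (1 - \<mu>) * real (deg V E v) * f v)"
      unfolding norm_laplacian_def sN_def using d by (auto simp: field_simps)
  qed
  then show ?thesis unfolding nlap_eigenvalues_def by auto
qed

lemma sN_restrict: "sN (\<lambda>z. if z \<in> V then f z else 0) = sN f"
  unfolding sN_def by (rule ext, rule sum.cong, use nb_sub in auto)

lemma eig_norm:
  assumes "\<mu> \<in> nlap_eigenvalues V E"
  shows "\<exists>e. (\<forall>z. z \<notin> V \<longrightarrow> e z = 0) \<and> BN e e = 1 \<and> (\<forall>v\<in>V. sN e v = (1 - \<mu>) * real (deg V E v) * e v)"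
proof -
  obtain f v0 where v0: "v0 \<in> V" "f v0 \<noteq> 0" and ev: "\<forall>v\<in>V. sN f v = (1 - \<mu>) * real (deg V E v) * f v"
    using assms eig_iff by blast
  define g where "g z = (if z \<in> V then f z else 0)" for z
  have sg': "sN g = sN f" unfolding g_def by (rule sN_restrict)
  have "BN g g \<ge> real (deg V E v0) * g v0 * g v0"
    unfolding BN_def using finV v0 
    by (intro member_le_sum) (auto simp: mult.assoc)
  moreover have "real (deg V E v0) * g v0 * g v0 > 0"
  proof -
    have "f v0 * f v0 > 0" using v0(2) by (metis not_real_square_gt_zero)
    then show ?thesis using v0 dpos'[OF v0(1)] by (simp add: g_def mult.assoc)
  qed
  ultimately have pos: "BN g g > 0" by linarith
  define e where "e z = g z / sqrt (BN g g)" for z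
  have "BN e e = BN g g / (sqrt (BN g g))^2"
    unfolding BN_def e_def by (simp add: sum_divide_distrib power2_eq_square algebra_simps)
  also have "\<dots> = 1" using pos by simp
  finally have n: "BN e e = 1" .
  have se: "sN e v = sN g v / sqrt (BN g g)" for v unfolding sN_def e_def by (simp add: sum_divide_distrib)
  have "\<forall>v\<in>V. sN e v = (1 - \<mu>) * real (deg V E v) * e v"
    using ev by (simp add: se sg' e_def g_def)
  moreover have "\<forall>z. z \<notin> V \<longrightarrow> e z = 0" by (simp add: e_def g_def)
  ultimately show ?thesis using n by blast
qed

lemma eig_orth:
  assumes "\<forall>v\<in>V. sN e v = (1 - \<mu>) * real (deg V E v) * e v"
    and "\<forall>v\<in>V. sN e' v = (1 - \<mu>') * real (deg V E v) * e' v" and "\<mu> \<noteq> \<mu>'"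
  shows "BN e e' = 0"
proof -
  have "(\<Sum>z\<in>V. sN e z * e' z) = (1 - \<mu>) * BN e e'"
    unfolding BN_def sum_distrib_left
  proof (rule sum.cong[OF refl])
    fix z assume "z \<in> V"
    then have "sN e z = (1 - \<mu>) * real (deg V E z) * e z" using assms(1) by blast
    then show "sN e z * e' z = (1 - \<mu>) * (real (deg V E z) * e z * e' z)" by simp
  qed
  moreover have "(\<Sum>z\<in>V. e z * sN e' z) = (1 - \<mu>') * BN e e'"
    unfolding BN_def sum_distrib_left
  proof (rule sum.cong[OF refl])
    fix z assume "z \<in> V"
    then have "sN e' z = (1 - \<mu>') * real (deg V E z) * e' z" using assms(2) by blast
    then show "e z * sN e' z = (1 - \<mu>') * (real (deg V E z) * e z * e' z)" by simp
  qed
  ultimately have "(1 - \<mu>) * BN e e' = (1 - \<mu>') * BN e e'" using sum_sym by metis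
  then show ?thesis using assms(3) by auto
qed

lemma bessel:
  assumes F: "finite F" and orth: "\<And>i j. i \<in> F \<Longrightarrow> j \<in> F \<Longrightarrow> BN (e i) (e j) = (if i = j then 1 else 0)"
    and x: "x \<in> V"
  shows "(\<Sum>i\<in>F. real (deg V E x) * (e i x)^2) \<le> 1"
proof -
  define d where "d = real (deg V E x)"
  have d: "d > 0" using dpos' x d_def by simp
  define c where "c i = d * e i x" for i
  define S where "S z = (\<Sum>i\<in>F. c i * e i z)" for z
  define I where "I z = (if z = x then 1 else (0::real))" for z
  have "0 \<le> (\<Sum>z\<in>V. real (deg V E z) * (I z - S z)^2)"
    by (intro sum_nonneg) auto
  also have "\<dots> = (\<Sum>z\<in>V. real (deg V E z) * (I z)^2) - 2 * (\<Sum>z\<in>V. real (deg V E z) * I z * S z)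
       + (\<Sum>z\<in>V. real (deg V E z) * (S z)^2)"
    by (simp add: power2_diff algebra_simps sum.distrib sum_subtractf sum_distrib_left)
  also have "(\<Sum>z\<in>V. real (deg V E z) * (I z)^2) = d"
  proof -
    have "(\<Sum>z\<in>V. real (deg V E z) * (I z)^2) = (\<Sum>z\<in>V. if z = x then d else 0)"
      by (rule sum.cong) (auto simp: I_def d_def)
    then show ?thesis using x finV by simp
  qed
  also have "(\<Sum>z\<in>V. real (deg V E z) * I z * S z) = d * S x"
  proof -
    have "(\<Sum>z\<in>V. real (deg V E z) * I z * S z) = (\<Sum>z\<in>V. if z = x then d * S x else 0)"
      by (rule sum.cong) (auto simp: I_def d_def)
    then show ?thesis using x finV by simp
  qed
  also have "d * S x = (\<Sum>i\<in>F. (c i)^2)"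
    by (simp add: S_def c_def sum_distrib_left power2_eq_square algebra_simps)
  also have "(\<Sum>z\<in>V. real (deg V E z) * (S z)^2) = (\<Sum>i\<in>F. \<Sum>j\<in>F. c i * c j * BN (e i) (e j))"
  proof -
    have "(\<Sum>z\<in>V. real (deg V E z) * (S z)^2) = (\<Sum>z\<in>V. \<Sum>i\<in>F. \<Sum>j\<in>F. c i * c j * (real (deg V E z) * e i z * e j z))"
      by (simp add: S_def power2_eq_square sum_product sum_distrib_left algebra_simps)
    also have "\<dots> = (\<Sum>i\<in>F. \<Sum>z\<in>V. \<Sum>j\<in>F. c i * c j * (real (deg V E z) * e i z * e j z))"
      by (rule sum.swap)
    also have "\<dots> = (\<Sum>i\<in>F. \<Sum>j\<in>F. \<Sum>z\<in>V. c i * c j * (real (deg V E z) * e i z * e j z))"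
      by (rule sum.cong[OF refl], rule sum.swap)
    also have "\<dots> = (\<Sum>i\<in>F. \<Sum>j\<in>F. c i * c j * BN (e i) (e j))"
      by (simp add: BN_def sum_distrib_left)
    finally show ?thesis .
  qed
  also have "\<dots> = (\<Sum>i\<in>F. (c i)^2)"
  proof -
    have "(\<Sum>i\<in>F. \<Sum>j\<in>F. c i * c j * BN (e i) (e j)) = (\<Sum>i\<in>F. \<Sum>j\<in>F. if i = j then c i * c j else 0)"
      by (intro sum.cong refl) (simp add: orth)
    then show ?thesis using F by (simp add: power2_eq_square)
  qed
  finally have "0 \<le> d - (\<Sum>i\<in>F. (c i)^2)" by simp
  moreover have "(\<Sum>i\<in>F. (c i)^2) = d * (\<Sum>i\<in>F. d * (e i x)^2)"
    by (simp add: c_def sum_distrib_left power2_eq_square algebra_simps)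
  ultimately have "d * (\<Sum>i\<in>F. d * (e i x)^2) \<le> d * 1" by simp
  then show ?thesis using d d_def by simp
qed

lemma eig_finite: "finite (nlap_eigenvalues V E)"
proof (rule ccontr)
  let ?S = "nlap_eigenvalues V E"
  assume inf: "infinite ?S"
  obtain F where F: "finite F" "card F = card V + 1" "F \<subseteq> ?S"
    using infinite_arbitrarily_large[OF inf] by blast
  have "\<forall>\<mu>\<in>?S. \<exists>e. (\<forall>z. z \<notin> V \<longrightarrow> e z = 0) \<and> BN e e = 1 \<and> (\<forall>v\<in>V. sN e v = (1 - \<mu>) * real (deg V E v) * e v)"
    using eig_norm by blast
  then obtain e where e: "\<And>\<mu>. \<mu> \<in> ?S \<Longrightarrow> BN (e \<mu>) (e \<mu>) = 1 \<and> (\<forall>v\<in>V. sN (e \<mu>) v = (1 - \<mu>) * real (deg V E v) * e \<mu> v)"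
    by metis
  have orth: "BN (e i) (e j) = (if i = j then 1 else 0)" if "i \<in> F" "j \<in> F" for i j
    using e[of i] e[of j] that F(3) eig_orth[of "e i" i "e j" j] by auto
  have "real (card F) = (\<Sum>i\<in>F. BN (e i) (e i))" using orth by simp
  also have "\<dots> = (\<Sum>x\<in>V. \<Sum>i\<in>F. real (deg V E x) * (e i x)^2)"
    unfolding BN_def by (subst sum.swap) (simp add: power2_eq_square mult.assoc)
  also have "\<dots> \<le> (\<Sum>x\<in>V. 1)"
    by (rule sum_mono) (rule bessel[OF F(1) orth], auto)
  finally have "real (card F) \<le> real (card V)" by simp
  then show False using F(2) by simp
qed


lemma sN_add: "sN (\<lambda>z. f z + g z) x = sN f x + sN g x" by (simp add: sN_def sum.distrib)
lemma sN_scale: "sN (\<lambda>z. t * f z) x = t * sN f x" by (simp add: sN_def sum_distrib_left)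
lemma sN_zero: "sN (\<lambda>z. 0) x = 0" by (simp add: sN_def)

lemma coord_cont: "continuous_on S (\<lambda>f::'a\<Rightarrow>real. f z)"
  by (rule continuous_on_subset[OF continuous_on_product_coordinates]) simp

lemma Qf_alt: "Qf f = (\<Sum>z\<in>V. inverse (real (deg V E z)) * (\<Sum>y\<in>nbhd V E z. f y)^2)"
  unfolding Qf_def sN_def by (intro sum.cong refl) (simp add: divide_inverse)

lemma Nf_cont: "continuous_on S Nf" unfolding Nf_def by (intro continuous_intros coord_cont)
lemma Qf_cont: "continuous_on S Qf" unfolding Qf_alt by (intro continuous_intros coord_cont)

lemma Nf_nonneg: "Nf f \<ge> 0" unfolding Nf_def by (intro sum_nonneg) auto
lemma Qf_nonneg: "Qf f \<ge> 0" unfolding Qf_def by (intro sum_nonneg) auto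

definition K where "K = {f. (\<forall>z. z \<notin> V \<longrightarrow> f z = 0) \<and> Nf f = 1}"

lemma K_compact: "compact K"
proof -
  define B where "B = PiE UNIV (\<lambda>z. if z \<in> V then {-1..1::real} else {0})"
  have "compactin (product_topology (\<lambda>_. euclidean) UNIV) B"
    unfolding B_def by (rule iffD2[OF compactin_PiE], rule disjI2) auto
  hence cB: "compact B" by (simp add: euclidean_product_topology)
  have cl: "closed K"
  proof -
    have "K = (\<Inter>z\<in>-V. {f. f z = 0}) \<inter> {f. Nf f = 1}" by (auto simp: K_def)
    moreover have "closed (\<Inter>z\<in>-V. {f::'a\<Rightarrow>real. f z = 0})"
      by (rule closed_INT, rule ballI, rule closed_Collect_eq[OF coord_cont continuous_on_const])
    moreover have "closed {f. Nf f = 1}"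
      by (rule closed_Collect_eq[OF Nf_cont continuous_on_const])
    ultimately show ?thesis by auto
  qed
  have "K \<subseteq> B"
  proof
    fix f assume f: "f \<in> K"
    show "f \<in> B" unfolding B_def PiE_UNIV_domain
    proof (rule Pi_I)
      fix z
      show "f z \<in> (if z \<in> V then {-1..1} else {0})"
      proof (cases "z \<in> V")
        case True
        have "real (deg V E z) * (f z)^2 \<le> Nf f" unfolding Nf_def using finV True
          by (intro member_le_sum) auto
        then have a: "real (deg V E z) * (f z)^2 \<le> 1" using f K_def by auto
        have b: "real (deg V E z) \<ge> 1" using dge1 True .
        have "1 * (f z)^2 \<le> real (deg V E z) * (f z)^2" using b
          by (intro mult_right_mono) auto
        then have "(f z)^2 \<le> real (deg V E z) * (f z)^2" by simp
        then have "(f z)^2 \<le> 1" using a by linarith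
        then have "\<bar>f z\<bar> \<le> 1" by (simp add: abs_square_le_1)
        then show ?thesis using True by auto
      next
        case False then show ?thesis using f K_def by auto
      qed
    qed
  qed
  then have "K = B \<inter> K" by auto
  then show ?thesis using compact_Int_closed[OF cB cl] by metis
qed

lemma K_ne: assumes "V \<noteq> {}" shows "K \<noteq> {}"
proof -
  obtain x0 where x0: "x0 \<in> V" using assms by auto
  define f where "f z = (if z = x0 then 1 / sqrt (real (deg V E x0)) else 0)" for z
  have "Nf f = (\<Sum>z\<in>V. if z = x0 then real (deg V E x0) * (1 / sqrt (real (deg V E x0)))^2 else 0)"
    unfolding Nf_def by (rule sum.cong) (auto simp: f_def)
  also have "\<dots> = 1" using x0 finV dpos'[OF x0] by (simp add: power_divide)
  finally have "f \<in> K" unfolding K_def using x0 by (auto simp: f_def)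
  then show ?thesis by auto
qed

lemma Nf_scale: "Nf (\<lambda>z. t * f z) = t^2 * Nf f"
  unfolding Nf_def by (simp add: sum_distrib_left power_mult_distrib algebra_simps)
lemma Qf_scale: "Qf (\<lambda>z. t * f z) = t^2 * Qf f"
  unfolding Qf_def by (simp add: sN_scale sum_distrib_left power_mult_distrib algebra_simps)

lemma Nf_zero: assumes "\<forall>z. z \<notin> V \<longrightarrow> f z = 0" "Nf f = 0" shows "f z = 0"
proof (cases "z \<in> V")
  case True
  have "\<forall>z\<in>V. real (deg V E z) * (f z)^2 = 0"
    using assms(2) unfolding Nf_def using finV by (subst (asm) sum_nonneg_eq_0_iff) auto
  then show ?thesis using True dpos'[OF True] by auto
next
  case False then show ?thesis using assms by auto
qed

lemma ray:
  assumes g: "g \<in> K" "\<forall>f\<in>K. Qf g \<le> Qf f" and h: "\<forall>z. z \<notin> V \<longrightarrow> h z = 0"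
  shows "Qf g * Nf h \<le> Qf h"
proof (cases "Nf h = 0")
  case True
  then have "\<And>z. h z = 0" using Nf_zero h by blast
  then have "Qf h = 0" unfolding Qf_def by (simp add: sN_def)
  then show ?thesis using True by simp
next
  case False
  then have pos: "Nf h > 0" using Nf_nonneg[of h] by linarith
  define h' where "h' z = (1 / sqrt (Nf h)) * h z" for z
  have "Nf h' = (1 / sqrt (Nf h))^2 * Nf h" unfolding h'_def by (rule Nf_scale)
  also have "\<dots> = 1" using pos by (simp add: power_divide)
  finally have "h' \<in> K" using h unfolding K_def h'_def by auto
  then have "Qf g \<le> Qf h'" using g by auto
  also have "Qf h' = Qf h / Nf h" unfolding h'_def Qf_scale using pos by (simp add: power_divide)
  finally show ?thesis using pos by (simp add: pos_le_divide_eq)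
qed

lemma term_exp: "(a + t*b)^2 / (d::real) = a^2/d + 2*t*(a*b/d) + t^2*(b^2/d)"
  by (cases "d = 0") (simp_all add: power2_eq_square field_simps)

lemma Qf_exp: "Qf (\<lambda>z. g z + t * h z) = Qf g + 2*t*BQ g h + t^2 * Qf h"
proof -
  have "Qf (\<lambda>z. g z + t * h z) = (\<Sum>z\<in>V. (sN g z)^2 / real (deg V E z) + 2*t*(sN g z * sN h z / real (deg V E z)) + t^2*((sN h z)^2 / real (deg V E z)))"
    unfolding Qf_def by (intro sum.cong refl) (simp only: sN_add sN_scale term_exp)
  also have "\<dots> = Qf g + 2*t*BQ g h + t^2 * Qf h"
    unfolding Qf_def BQ_def by (simp only: sum.distrib sum_distrib_left)
  finally show ?thesis .
qed
lemma Nf_exp: "Nf (\<lambda>z. g z + t * h z) = Nf g + 2*t*BN g h + t^2 * Nf h"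
proof -
  have "Nf (\<lambda>z. g z + t * h z) = (\<Sum>z\<in>V. real (deg V E z) * (g z)^2 + 2*t*(real (deg V E z) * g z * h z) + t^2*(real (deg V E z) * (h z)^2))"
    unfolding Nf_def by (intro sum.cong refl) (simp add: power2_eq_square algebra_simps)
  also have "\<dots> = Nf g + 2*t*BN g h + t^2 * Nf h"
    unfolding Nf_def BN_def by (simp only: sum.distrib sum_distrib_left)
  finally show ?thesis .
qed

lemma lagrange: fixes a b :: real assumes "\<forall>t. a*t + b*t^2 \<ge> 0" shows "a = 0"
proof (rule ccontr)
  assume a: "a \<noteq> 0"
  define e where "e = \<bar>a\<bar> / (2*(\<bar>b\<bar>+1))"
  have e: "e > 0" using a by (simp add: e_def)
  have 1: "a*e + b*e^2 \<ge> 0" using assms by blast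
  have 2: "a*(-e) + b*(-e)^2 \<ge> 0" using assms by blast
  have "\<bar>a\<bar>*e \<le> b*e^2" using 1 2 by (cases "a \<ge> 0") auto
  then have "\<bar>a\<bar> \<le> b*e" using e by (simp add: power2_eq_square)
  also have "\<dots> \<le> \<bar>b\<bar>*e" using e by (simp add: mult_right_mono)
  also have "\<bar>b\<bar>*e = \<bar>a\<bar> * (\<bar>b\<bar> / (2*(\<bar>b\<bar>+1)))" by (simp add: e_def)
  also have "\<dots> < \<bar>a\<bar> * 1"
    using a by (intro mult_strict_left_mono) (auto simp: divide_less_eq)
  finally show False by simp
qed

lemma sN_ind: assumes "x \<in> V" shows "sN (\<lambda>y. if y = x then 1 else 0) z = (if E z x then 1 else 0)"
proof -
  have "sN (\<lambda>y. if y = x then 1 else 0) z = (\<Sum>y\<in>V. if y = x then (if E z x then 1 else 0) else 0)"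
    unfolding sN_V by (intro sum.cong refl) auto
  then show ?thesis using assms finV by simp
qed

lemma min_eq:
  assumes g: "g \<in> K" "\<forall>f\<in>K. Qf g \<le> Qf f" and x: "x \<in> V"
  shows "sN (\<lambda>z. sN g z / real (deg V E z)) x = Qf g * real (deg V E x) * g x"
proof -
  define h where "h y = (if y = x then 1 else (0::real))" for y
  have gV: "\<forall>z. z \<notin> V \<longrightarrow> g z = 0" and g1: "Nf g = 1" using g(1) by (auto simp: K_def)
  have "\<forall>t. (2*(BQ g h - Qf g * BN g h))*t + (Qf h - Qf g * Nf h)*t^2 \<ge> 0"
  proof
    fix t
    have hz: "\<forall>z. z \<notin> V \<longrightarrow> g z + t * h z = 0" using gV x by (auto simp: h_def)
    have "Qf g * Nf (\<lambda>z. g z + t * h z) \<le> Qf (\<lambda>z. g z + t * h z)" by (rule ray[OF g(1) g(2) hz])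
    then have r: "Qf g * (Nf g + 2*t*BN g h + t^2 * Nf h) \<le> Qf g + 2*t*BQ g h + t^2 * Qf h"
      by (simp only: Qf_exp Nf_exp)
    have "(2*(BQ g h - Qf g * BN g h))*t + (Qf h - Qf g * Nf h)*t^2 =
       (Qf g + 2*t*BQ g h + t^2 * Qf h) - Qf g * (Nf g + 2*t*BN g h + t^2 * Nf h)"
      using g1 by (simp add: algebra_simps)
    then show "(2*(BQ g h - Qf g * BN g h))*t + (Qf h - Qf g * Nf h)*t^2 \<ge> 0" using r by linarith
  qed
  then have "2*(BQ g h - Qf g * BN g h) = 0" by (rule lagrange)
  then have eq: "BQ g h = Qf g * BN g h" by simp
  have "BQ g h = (\<Sum>z\<in>V. if E x z then sN g z / real (deg V E z) else 0)"
    unfolding BQ_def h_def using x by (intro sum.cong refl) (simp add: sN_ind Esym_iff[of _ x])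
  also have "\<dots> = sN (\<lambda>z. sN g z / real (deg V E z)) x" by (simp only: sN_V[of "\<lambda>z. sN g z / real (deg V E z)" x])
  finally have 1: "BQ g h = sN (\<lambda>z. sN g z / real (deg V E z)) x" .
  have "BN g h = (\<Sum>z\<in>V. if z = x then real (deg V E x) * g x else 0)"
    unfolding BN_def h_def by (intro sum.cong refl) auto
  also have "\<dots> = real (deg V E x) * g x" using x finV by simp
  finally show ?thesis using eq 1 by simp
qed

lemma lemA:
  assumes ne: "V \<noteq> {}" and eps: "spectral_eps V E = 1/2" and f: "\<forall>z. z \<notin> V \<longrightarrow> f z = 0"
  shows "Nf f / 4 \<le> Qf f"
proof -
  obtain g where g: "g \<in> K" "\<forall>f\<in>K. Qf g \<le> Qf f"
    using continuous_attains_inf[OF K_compact K_ne[OF ne] Qf_cont] by blast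
  define c where "c = Qf g"
  define s where "s = sqrt c"
  have c0: "c \<ge> 0" using Qf_nonneg unfolding c_def by blast
  have s2: "s^2 = c" using c0 unfolding s_def by (rule real_sqrt_pow2)
  have s0: "s \<ge> 0" unfolding s_def using c0 by simp
  have gV: "\<forall>z. z \<notin> V \<longrightarrow> g z = 0" and g1: "Nf g = 1" using g(1) by (auto simp: K_def)
  have eq: "\<forall>x\<in>V. sN (\<lambda>z. sN g z / real (deg V E z)) x = c * real (deg V E x) * g x"
    unfolding c_def using min_eq[OF g(1) g(2)] by blast
  have "\<exists>\<mu>\<in>nlap_eigenvalues V E. \<bar>1 - \<mu>\<bar> = s"
  proof (cases "\<exists>x\<in>V. sN g x / real (deg V E x) + s * g x \<noteq> 0")
    case True
    define h where "h z = sN g z / real (deg V E z) + s * g z" for z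
    have "\<forall>v\<in>V. sN h v = (1 - (1 - s)) * real (deg V E v) * h v"
    proof
      fix v assume v: "v \<in> V"
      have d: "real (deg V E v) > 0" using dpos'[OF v] .
      have "sN h v = sN (\<lambda>z. sN g z / real (deg V E z)) v + s * sN g v"
        unfolding h_def by (simp only: sN_add sN_scale)
      also have "\<dots> = c * real (deg V E v) * g v + s * sN g v" using eq v by simp
      also have "\<dots> = (1 - (1 - s)) * real (deg V E v) * h v"
        unfolding h_def using d s2 by (simp add: field_simps power2_eq_square)
      finally show "sN h v = (1 - (1 - s)) * real (deg V E v) * h v" .
    qed
    moreover have "\<exists>v\<in>V. h v \<noteq> 0" using True unfolding h_def by blast
    ultimately have "1 - s \<in> nlap_eigenvalues V E" unfolding eig_iff by blast
    moreover have "\<bar>1 - (1 - s)\<bar> = s" using s0 by simp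
    ultimately show ?thesis by blast
  next
    case False
    have neg: "\<forall>x\<in>V. sN g x = (1 - (1 + s)) * real (deg V E x) * g x"
    proof
      fix x assume x: "x \<in> V"
      have d: "real (deg V E x) > 0" using dpos'[OF x] .
      have "sN g x / real (deg V E x) + s * g x = 0" using False x by blast
      then have "sN g x / real (deg V E x) = - s * g x" by simp
      then have "sN g x = (- s * g x) * real (deg V E x)" using d by (simp add: divide_eq_eq)
      then show "sN g x = (1 - (1 + s)) * real (deg V E x) * g x" by simp
    qed
    have "\<exists>v\<in>V. g v \<noteq> 0"
    proof (rule ccontr)
      assume "\<not> (\<exists>v\<in>V. g v \<noteq> 0)"
      then have "Nf g = 0" unfolding Nf_def by simp
      then show False using g1 by simp
    qed
    then have "1 + s \<in> nlap_eigenvalues V E" using neg unfolding eig_iff by blast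
    moreover have "\<bar>1 - (1 + s)\<bar> = s" using s0 by simp
    ultimately show ?thesis by blast
  qed
  then obtain \<mu> where mu: "\<mu> \<in> nlap_eigenvalues V E" "\<bar>1 - \<mu>\<bar> = s" by blast
  have "spectral_eps V E \<le> \<bar>1 - \<mu>\<bar>"
    unfolding spectral_eps_def using mu(1) eig_finite by (intro Min_le) auto
  then have s12: "1/2 \<le> s" using eps mu by simp
  then have "1/2 * (1/2) \<le> s * s" by (intro mult_mono) auto
  then have c4: "1/4 \<le> c" using s2 by (simp add: power2_eq_square)
  have "c * Nf f \<le> Qf f" using ray[OF g(1) g(2) f] unfolding c_def .
  moreover have "1/4 * Nf f \<le> c * Nf f" using c4 Nf_nonneg[of f]
    by (intro mult_right_mono) auto
  ultimately show ?thesis by linarith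
qed


lemma Nf_local:
  assumes "finite C" "C \<subseteq> V" "\<forall>x. x \<notin> C \<longrightarrow> f x = 0"
  shows "Nf f = (\<Sum>z\<in>C. real (deg V E z) * (f z)^2)"
  unfolding Nf_def using assms finV by (intro sum.mono_neutral_right) auto

lemma Qf_local:
  assumes "finite C" "C \<subseteq> V" "\<forall>x. x \<notin> C \<longrightarrow> f x = 0" "finite Z" "Z \<subseteq> V"
    "\<forall>y\<in>C. nbhd V E y \<subseteq> Z"
  shows "Qf f = (\<Sum>z\<in>Z. (\<Sum>y\<in>C. if E y z then f y else 0)^2 / real (deg V E z))"
proof -
  have s: "sN f z = (\<Sum>y\<in>C. if E y z then f y else 0)" for z
  proof -
    have "sN f z = (\<Sum>y\<in>V. if E z y then f y else 0)" by (rule sN_V)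
    also have "\<dots> = (\<Sum>y\<in>C. if E z y then f y else 0)"
      using assms(1-3) finV by (intro sum.mono_neutral_right) auto
    also have "\<dots> = (\<Sum>y\<in>C. if E y z then f y else 0)"
      by (intro sum.cong refl) (simp add: Esym_iff[of z])
    finally show ?thesis .
  qed
  have "Qf f = (\<Sum>z\<in>V. (\<Sum>y\<in>C. if E y z then f y else 0)^2 / real (deg V E z))"
    unfolding Qf_def s ..
  also have "\<dots> = (\<Sum>z\<in>Z. (\<Sum>y\<in>C. if E y z then f y else 0)^2 / real (deg V E z))"
  proof (rule sum.mono_neutral_right)
    show "finite V" by (rule finV)
    show "Z \<subseteq> V" by (rule assms(5))
    show "\<forall>i\<in>V - Z. (\<Sum>y\<in>C. if E y i then f y else 0)\<^sup>2 / real (deg V E i) = 0"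
    proof
      fix i assume i: "i \<in> V - Z"
      have "(\<Sum>y\<in>C. if E y i then f y else 0) = 0"
      proof (intro sum.neutral ballI)
        fix y assume y: "y \<in> C"
        have "\<not> E y i" using assms(6) y i mem_nb by blast
        then show "(if E y i then f y else 0) = 0" by simp
      qed
      then show "(\<Sum>y\<in>C. if E y i then f y else 0)\<^sup>2 / real (deg V E i) = 0" by simp
    qed
  qed
  finally show ?thesis .
qed

lemma nbE: "nbhd V E y = S \<Longrightarrow> E y z \<longleftrightarrow> z \<in> S" using mem_nb by blast
lemma nbV: "nbhd V E y = S \<Longrightarrow> z \<in> S \<Longrightarrow> z \<in> V" using nb_sub by blast

lemma nb2: assumes "deg V E x = 2" "E x y" shows "\<exists>p. nbhd V E x = {y,p} \<and> p \<noteq> y"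
proof -
  have "card (nbhd V E x) = 2" using assms(1) by (simp add: deg_def)
  then obtain a b where ab: "nbhd V E x = {a,b}" "a \<noteq> b" by (auto simp: card_2_iff)
  have "y \<in> nbhd V E x" using assms(2) mem_nb by blast
  then show ?thesis using ab by (auto simp: insert_commute)
qed

lemma nb2': assumes "deg V E x = 2" "E x y" "E x z" "y \<noteq> z" shows "nbhd V E x = {y,z}"
proof -
  obtain p where p: "nbhd V E x = {y,p}" "p \<noteq> y" using nb2[OF assms(1,2)] by blast
  have "z \<in> nbhd V E x" using assms(3) mem_nb by blast
  then show ?thesis using p assms(4) by auto
qed

lemma nb3: assumes "deg V E x = 3" "E x y" shows "\<exists>p q. nbhd V E x = {y,p,q} \<and> p \<noteq> y \<and> q \<noteq> y \<and> p \<noteq> q"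
proof -
  have "card (nbhd V E x) = 3" using assms(1) by (simp add: deg_def)
  then obtain a b c where abc: "nbhd V E x = {a,b,c}" "a \<noteq> b" "b \<noteq> c" "a \<noteq> c" by (auto simp: card_3_iff)
  have "y \<in> nbhd V E x" using assms(2) mem_nb by blast
  then show ?thesis using abc by (auto simp: insert_commute)
qed

end

locale setting = grph +
  assumes ne: "V \<noteq> {}" and eps: "spectral_eps V E = 1/2" and dmin: "\<And>z. z \<in> V \<Longrightarrow> deg V E z \<ge> 2"
begin

lemma cert:
  assumes "finite C" "C \<subseteq> V" "\<forall>x. x \<notin> C \<longrightarrow> f x = 0" "finite Z" "Z \<subseteq> V" "\<forall>y\<in>C. nbhd V E y \<subseteq> Z"
   "\<forall>z\<in>Z. 0 < L z \<and> L z \<le> real (deg V E z)" "\<forall>z\<in>C. real (deg V E z) = D z"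
  shows "(\<Sum>z\<in>C. D z * (f z)^2) / 4 \<le> (\<Sum>z\<in>Z. (\<Sum>y\<in>C. if E y z then f y else 0)^2 / L z)"
proof -
  have fV: "\<forall>z. z \<notin> V \<longrightarrow> f z = 0" using assms(2,3) by blast
  have "Nf f = (\<Sum>z\<in>C. D z * (f z)^2)"
    unfolding Nf_local[OF assms(1-3)] using assms(8) by (intro sum.cong refl) auto
  moreover have "Qf f = (\<Sum>z\<in>Z. (\<Sum>y\<in>C. if E y z then f y else 0)^2 / real (deg V E z))"
    by (rule Qf_local[OF assms(1-6)])
  moreover have "(\<Sum>z\<in>Z. (\<Sum>y\<in>C. if E y z then f y else 0)^2 / real (deg V E z))
       \<le> (\<Sum>z\<in>Z. (\<Sum>y\<in>C. if E y z then f y else 0)^2 / L z)"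
    using assms(7) by (intro sum_mono divide_left_mono) auto
  moreover have "Nf f / 4 \<le> Qf f" by (rule lemA[OF ne eps fV])
  ultimately show ?thesis by linarith
qed

lemma dge2: "z \<in> V \<Longrightarrow> real (deg V E z) \<ge> 2" using dmin by (metis of_nat_le_iff of_nat_numeral)

end

context grph begin

lemma book13: "{1..3::nat} = {1,2,3}" by auto

lemma book_final:
  assumes conn: "connected_graph V E"
   and hu: "nbhd V E u = {v,a}" and hv: "nbhd V E v = {u,w}" and hw: "nbhd V E w = {v,b,c}"
   and ha: "nbhd V E a = {u,a1,a2}" and hb: "nbhd V E b = {w,a1}" and hc: "nbhd V E c = {w,a2}"
   and ha1: "nbhd V E a1 = {a,b}" and ha2: "nbhd V E a2 = {a,c}"
   and dist: "distinct [u,v,w,a,b,c,a1,a2]"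
  shows "graph_iso V E (book_V 3) (book_E 3)"
proof -
  define S where "S = {u,v,w,a,b,c,a1,a2}"
  have dd: "u \<noteq> v" "u \<noteq> w" "u \<noteq> a" "u \<noteq> b" "u \<noteq> c" "u \<noteq> a1" "u \<noteq> a2" "v \<noteq> u" "v \<noteq> w" "v \<noteq> a" "v \<noteq> b" "v \<noteq> c" "v \<noteq> a1" "v \<noteq> a2" "w \<noteq> u" "w \<noteq> v" "w \<noteq> a" "w \<noteq> b" "w \<noteq> c" "w \<noteq> a1" "w \<noteq> a2" "a \<noteq> u" "a \<noteq> v" "a \<noteq> w" "a \<noteq> b" "a \<noteq> c" "a \<noteq> a1" "a \<noteq> a2" "b \<noteq> u" "b \<noteq> v" "b \<noteq> w" "b \<noteq> a" "b \<noteq> c" "b \<noteq> a1" "b \<noteq> a2" "c \<noteq> u" "c \<noteq> v" "c \<noteq> w" "c \<noteq> a" "c \<noteq> b" "c \<noteq> a1" "c \<noteq> a2" "a1 \<noteq> u" "a1 \<noteq> v" "a1 \<noteq> w" "a1 \<noteq> a" "a1 \<noteq> b" "a1 \<noteq> c" "a1 \<noteq> a2" "a2 \<noteq> u" "a2 \<noteq> v" "a2 \<noteq> w" "a2 \<noteq> a" "a2 \<noteq> b" "a2 \<noteq> c" "a2 \<noteq> a1" using dist by auto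
  have uV: "u \<in> V" using hu mem_nb EV by blast
  have SV: "S \<subseteq> V" unfolding S_def using uV nbV[OF hu] nbV[OF hv] nbV[OF hw] nbV[OF ha] by auto
  have clos: "\<And>x y. x \<in> S \<Longrightarrow> E x y \<Longrightarrow> y \<in> S"
  proof -
    fix x y assume x: "x \<in> S" and e: "E x y"
    have "y \<in> nbhd V E x" using e mem_nb by blast
    then show "y \<in> S" using x unfolding S_def
      using hu hv hw ha hb hc ha1 ha2 by auto
  qed
  have VS: "V \<subseteq> S"
  proof
    fix y assume y: "y \<in> V"
    have "(\<lambda>a b. a \<in> V \<and> b \<in> V \<and> E a b)\<^sup>*\<^sup>* u y" using conn uV y unfolding connected_graph_def by blast
    then show "y \<in> S"
    proof (induction rule: rtranclp_induct)
      case base then show ?case by (simp add: S_def)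
    next
      case (step y z) then show ?case using clos by blast
    qed
  qed
  have VeqS: "V = S" using SV VS by blast
  define \<phi> where "\<phi> x = (if x = w then BX else if x = a then BY else if x = v then BV 1 else if x = u then BW 1
      else if x = b then BV 2 else if x = a1 then BW 2 else if x = c then BV 3 else BW 3)" for x
  have img: "\<phi> ` S = book_V 3"
    using dd unfolding S_def book_V_def book13 \<phi>_def by auto
  have inj: "inj_on \<phi> S"
    using dd unfolding S_def inj_on_def \<phi>_def by auto
  have edges: "\<forall>x\<in>S. \<forall>y\<in>S. E x y \<longleftrightarrow> book_E 3 (\<phi> x) (\<phi> y)"
    using dd unfolding S_def book_E_def book13 \<phi>_def
    by (simp add: nbE[OF hu] nbE[OF hv] nbE[OF hw] nbE[OF ha] nbE[OF hb] nbE[OF hc] nbE[OF ha1] nbE[OF ha2])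
  show ?thesis unfolding graph_iso_def VeqS
    using inj img edges by (intro exI[of _ \<phi>]) (auto simp: bij_betw_def)
qed

end

context setting begin

lemma tri:
  assumes hu: "nbhd V E u = {v,w}" and hv: "nbhd V E v = {u,w}" and hw: "nbhd V E w = {v,u,c}"
   and d: "u \<noteq> v" "u \<noteq> w" "v \<noteq> w" "c \<noteq> u" "c \<noteq> v" "c \<noteq> w"
  shows False
proof -
  have V: "u \<in> V" "v \<in> V" "w \<in> V" "c \<in> V" using nbV[OF hu] nbV[OF hv] nbV[OF hw] by auto
  have du: "deg V E u = 2" "deg V E v = 2" "deg V E w = 3" using hu hv hw d by (auto simp: deg_def)
  have dc: "deg V E c \<ge> 2" using dmin V by blast
  note dd = d d[THEN not_sym]
  show False
  proof (cases "deg V E c \<ge> 3")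
    case True
    from cert[of "{u,v,w}" "\<lambda>x. if x = u then 1 else if x = v then 1 else if x = w then -1 else 0"
       "{u,v,w,c}" "\<lambda>z. if z = w then 3 else if z = c then 3 else 2" "\<lambda>z. if z = w then 3 else 2"]
    show False using V du True dd by (simp add: nbE[OF hu] nbE[OF hv] nbE[OF hw] hu hv hw)
  next
    case False
    then have "deg V E c = 2" using dc by simp
    moreover have "E c w" using hw mem_nb[of c w] Esym by auto
    ultimately obtain e where he: "nbhd V E c = {w,e}" "e \<noteq> w" using nb2 by blast
    have eV: "e \<in> V" using nbV[OF he(1)] by auto
    have "e \<noteq> u" using he hu d mem_nb Esym_iff by (metis insertE singletonD insertI1 insertI2)
    have "e \<noteq> v" using he hv d mem_nb Esym_iff by (metis insertE singletonD insertI1 insertI2)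
    have "e \<noteq> c" using he mem_nb Eirr by blast
    note dd2 = dd \<open>e \<noteq> u\<close> \<open>e \<noteq> v\<close> \<open>e \<noteq> c\<close> he(2) \<open>e \<noteq> u\<close>[THEN not_sym] \<open>e \<noteq> v\<close>[THEN not_sym] \<open>e \<noteq> c\<close>[THEN not_sym] he(2)[THEN not_sym]
    from cert[of "{u,v,w,c}" "\<lambda>x. if x = u then -1 else if x = v then -1 else if x = w then 1 else if x = c then 1 else 0"
       "{u,v,w,c,e}" "\<lambda>z. if z = w then 3 else 2" "\<lambda>z. if z = w then 3 else 2"]
    show False using V eV du \<open>deg V E c = 2\<close> dd2 dmin[OF eV]
      by (simp add: nbE[OF hu] nbE[OF hv] nbE[OF hw] nbE[OF he(1)] hu hv hw he(1))
  qed
qed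


lemma nbself: "nbhd V E y = insert z S \<Longrightarrow> y \<in> V" using mem_nb EV by blast

lemma adjw:
  assumes hu: "nbhd V E u = {v,a}" and hv: "nbhd V E v = {u,w}" and hw: "nbhd V E w = {v,a,c}"
   and d: "u \<noteq> v" "u \<noteq> w" "u \<noteq> a" "u \<noteq> c" "v \<noteq> w" "v \<noteq> a" "v \<noteq> c" "w \<noteq> a" "w \<noteq> c" "a \<noteq> c"
  shows False
proof -
  have V: "u \<in> V" "v \<in> V" "w \<in> V" "a \<in> V" "c \<in> V" using nbV[OF hu] nbV[OF hv] nbV[OF hw] by auto
  have du: "deg V E u = 2" "deg V E v = 2" "deg V E w = 3" using hu hv hw d by (auto simp: deg_def)
  note dd = d d[THEN not_sym]
  from cert[of "{u,w}" "\<lambda>x. if x = u then 1 else if x = w then -1 else 0"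
       "{v,a,c}" "\<lambda>z. 2" "\<lambda>z. if z = w then 3 else 2"]
  show False using V du dd dmin[OF V(4)] dmin[OF V(5)] by (simp add: nbE[OF hu] nbE[OF hw] hu hw)
qed

lemma cda2:
  assumes hu: "nbhd V E u = {v,a}" and hv: "nbhd V E v = {u,w}" and dw: "deg V E w = 3" and ha: "nbhd V E a = {u,p}"
   and d: "u \<noteq> v" "u \<noteq> w" "u \<noteq> a" "u \<noteq> p" "v \<noteq> w" "v \<noteq> a" "v \<noteq> p" "w \<noteq> a" "w \<noteq> p" "a \<noteq> p"
  shows False
proof -
  have V: "u \<in> V" "v \<in> V" "w \<in> V" "a \<in> V" "p \<in> V" using nbV[OF hu] nbV[OF hv] nbV[OF ha] by auto
  have du: "deg V E u = 2" "deg V E v = 2" "deg V E a = 2" using hu hv ha d by (auto simp: deg_def)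
  note dd = d d[THEN not_sym]
  from cert[of "{a,v}" "\<lambda>x. if x = a then 1 else if x = v then -1 else 0"
       "{u,p,w}" "\<lambda>z. if z = w then 3 else 2" "\<lambda>z. 2"]
  show False using V du dw dd dmin[OF V(5)] by (simp add: nbE[OF ha] nbE[OF hv] ha hv)
qed

lemma da4:
  assumes hu: "nbhd V E u = {v,a}" and hv: "nbhd V E v = {u,w}" and hw: "nbhd V E w = {v,b,c}"
   and d: "u \<noteq> v" "u \<noteq> w" "u \<noteq> a" "u \<noteq> b" "u \<noteq> c" "v \<noteq> w" "v \<noteq> a" "v \<noteq> b" "v \<noteq> c"
     "w \<noteq> a" "w \<noteq> b" "w \<noteq> c" "a \<noteq> b" "a \<noteq> c" "b \<noteq> c"
   and da: "deg V E a \<ge> 4"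
  shows False
proof -
  have V: "u \<in> V" "v \<in> V" "w \<in> V" "a \<in> V" "b \<in> V" "c \<in> V" using nbV[OF hu] nbV[OF hv] nbV[OF hw] by auto
  have du: "deg V E u = 2" "deg V E v = 2" "deg V E w = 3" using hu hv hw d by (auto simp: deg_def)
  note dd = d d[THEN not_sym]
  from cert[of "{u,w}" "\<lambda>x. if x = u then 3 else if x = w then -2 else 0"
       "{v,a,b,c}" "\<lambda>z. if z = a then 4 else 2" "\<lambda>z. if z = w then 3 else 2"]
  show False using V du da dd dmin[OF V(5)] dmin[OF V(6)] by (simp add: nbE[OF hu] nbE[OF hw] hu hw)
qed

lemma f54:
  assumes hu: "nbhd V E u = {v,a}" and hv: "nbhd V E v = {u,w}" and hw: "nbhd V E w = {v,b,c}"
   and d: "u \<noteq> v" "u \<noteq> w" "u \<noteq> a" "u \<noteq> b" "u \<noteq> c" "v \<noteq> w" "v \<noteq> a" "v \<noteq> b" "v \<noteq> c"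
     "w \<noteq> a" "w \<noteq> b" "w \<noteq> c" "a \<noteq> b" "a \<noteq> c" "b \<noteq> c"
   and da: "deg V E a \<ge> 3" and db: "deg V E b \<ge> 3"
  shows False
proof -
  have V: "u \<in> V" "v \<in> V" "w \<in> V" "a \<in> V" "b \<in> V" "c \<in> V" using nbV[OF hu] nbV[OF hv] nbV[OF hw] by auto
  have du: "deg V E u = 2" "deg V E v = 2" "deg V E w = 3" using hu hv hw d by (auto simp: deg_def)
  note dd = d d[THEN not_sym]
  from cert[of "{u,w}" "\<lambda>x. if x = u then 1 else if x = w then -1 else 0"
       "{v,a,b,c}" "\<lambda>z. if z = a then 3 else if z = b then 3 else 2" "\<lambda>z. if z = w then 3 else 2"]
  show False using V du da db dd dmin[OF V(6)] by (simp add: nbE[OF hu] nbE[OF hw] hu hw)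
qed

lemma cab:
  assumes hv: "nbhd V E v = {u,w}" and hb: "nbhd V E b = {w,a}" and dw: "deg V E w = 3" and da: "deg V E a = 3"
   and d: "u \<noteq> v" "u \<noteq> w" "u \<noteq> a" "u \<noteq> b" "v \<noteq> w" "v \<noteq> a" "v \<noteq> b" "w \<noteq> a" "w \<noteq> b" "a \<noteq> b"
  shows False
proof -
  have V: "u \<in> V" "v \<in> V" "w \<in> V" "a \<in> V" "b \<in> V" using nbV[OF hv] nbV[OF hb] nbself[OF hv] nbself[OF hb] by auto
  have du: "deg V E v = 2" "deg V E b = 2" using hv hb d by (auto simp: deg_def)
  note dd = d d[THEN not_sym]
  from cert[of "{v,b}" "\<lambda>x. if x = v then 1 else if x = b then -1 else 0"
       "{u,w,a}" "\<lambda>z. if z = u then 2 else 3" "\<lambda>z. 2"]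
  show False using V du dw da dd dmin[OF V(1)] by (simp add: nbE[OF hv] nbE[OF hb] hv hb)
qed

lemma close:
  assumes hu: "nbhd V E u = {v,a}" and hw: "nbhd V E w = {v,b,c}" and hx: "nbhd V E x = {a,A}"
   and da: "deg V E a \<ge> 3"
   and d: "u \<noteq> w" "u \<noteq> x" "w \<noteq> x"
     "v \<noteq> a" "v \<noteq> b" "v \<noteq> c" "v \<noteq> A" "a \<noteq> b" "a \<noteq> c" "a \<noteq> A" "b \<noteq> c" "b \<noteq> A" "c \<noteq> A"
  shows False
proof -
  have V: "u \<in> V" "v \<in> V" "w \<in> V" "a \<in> V" "b \<in> V" "c \<in> V" "x \<in> V" "A \<in> V"
    using nbV[OF hu] nbV[OF hw] nbV[OF hx] nbself[OF hu] nbself[OF hw] nbself[OF hx] by auto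
  have du: "deg V E u = 2" "deg V E w = 3" "deg V E x = 2" using hu hw hx d by (auto simp: deg_def)
  note dd = d d[THEN not_sym]
  from cert[of "{u,w,x}" "\<lambda>y. if y = u then 3 else if y = w then -2 else if y = x then -3 else 0"
       "{v,a,b,c,A}" "\<lambda>z. if z = a then 3 else 2" "\<lambda>z. if z = w then 3 else 2"]
  show False using V du da dd dmin[OF V(2)] dmin[OF V(5)] dmin[OF V(6)] dmin[OF V(8)]
    by (simp add: nbE[OF hu] nbE[OF hw] nbE[OF hx] hu hw hx)
qed


lemma main_local:
  assumes conn: "connected_graph V E"
    and uv: "u \<noteq> v" and vw: "v \<noteq> w" and uw: "u \<noteq> w" and euv: "E u v" and evw: "E v w"
    and du: "deg V E u = 2" and dv: "deg V E v = 2" and dw: "deg V E w = 3"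
  shows "graph_iso V E (book_V 3) (book_E 3)"
proof -
  obtain a where hu: "nbhd V E u = {v,a}" and av: "a \<noteq> v" using nb2[OF du euv] by blast
  have hv: "nbhd V E v = {u,w}" using nb2'[OF dv Esym[OF euv] evw uw] .
  obtain b c where hw: "nbhd V E w = {v,b,c}" and bv: "b \<noteq> v" and cv: "c \<noteq> v" and bc: "b \<noteq> c"
    using nb3[OF dw Esym[OF evw]] by blast
  have uV: "u \<in> V" and vV: "v \<in> V" and wV: "w \<in> V" using EV euv evw by auto
  have aV: "a \<in> V" and bV: "b \<in> V" and cV: "c \<in> V" using nbV[OF hu] nbV[OF hw] by auto
  have Eua: "E u a" using hu mem_nb by blast
  have Ewb: "E w b" and Ewc: "E w c" using hw mem_nb by blast+
  have au: "a \<noteq> u" using Eua Eirr by blast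
  have bw: "b \<noteq> w" and cw: "c \<noteq> w" using Ewb Ewc Eirr by blast+
  have aw: "a \<noteq> w"
  proof
    assume aw: "a = w"
    then have hu': "nbhd V E u = {v,w}" using hu by simp
    have "E u w" using Eua aw by simp
    then have "E w u" by (rule Esym)
    then have "u \<in> {v,b,c}" using hw mem_nb by blast
    then have "u = b \<or> u = c" using uv by blast
    then show False
    proof
      assume ub: "u = b"
      then have hw': "nbhd V E w = {v,u,c}" using hw by simp
      show False by (rule tri[OF hu' hv hw' uv uw vw]) (use ub bc cv cw in auto)
    next
      assume uc: "u = c"
      then have hw': "nbhd V E w = {v,u,b}" using hw by (simp add: insert_commute)
      show False by (rule tri[OF hu' hv hw' uv uw vw]) (use uc bc bv bw in auto)
    qed
  qed
  have bu: "b \<noteq> u"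
  proof
    assume "b = u"
    then have "E u w" using Ewb Esym by simp
    then have "w \<in> {v,a}" using hu mem_nb by blast
    then show False using vw aw by auto
  qed
  have cu: "c \<noteq> u"
  proof
    assume "c = u"
    then have "E u w" using Ewc Esym by simp
    then have "w \<in> {v,a}" using hu mem_nb by blast
    then show False using vw aw by auto
  qed
  have ab: "a \<noteq> b"
  proof
    assume "a = b"
    then have hw': "nbhd V E w = {v,a,c}" using hw by simp
    show False by (rule adjw[OF hu hv hw']) (use uv uw au cu vw av cv aw cw \<open>a = b\<close> bc in auto)
  qed
  have ac: "a \<noteq> c"
  proof
    assume "a = c"
    then have hw': "nbhd V E w = {v,a,b}" using hw by (simp add: insert_commute)
    show False by (rule adjw[OF hu hv hw']) (use uv uw au bu vw av bv aw bw \<open>a = c\<close> bc in auto)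
  qed
  note D1 = uv vw uw av bv cv bc au bw cw aw bu cu ab ac
  have Eau: "E a u" using Eua Esym by blast
  have nEaw: "\<not> E a w"
  proof
    assume "E a w"
    then have "E w a" by (rule Esym)
    then have "a \<in> {v,b,c}" using hw mem_nb by blast
    then show False using av ab ac by auto
  qed
  have nEav: "\<not> E a v"
  proof
    assume "E a v"
    then have "E v a" by (rule Esym)
    then have "a \<in> {u,w}" using hv mem_nb by blast
    then show False using au aw by auto
  qed
  have da3: "deg V E a = 3"
  proof -
    have "deg V E a \<ge> 2" using dmin aV by blast
    moreover have "deg V E a \<noteq> 2"
    proof
      assume da2: "deg V E a = 2"
      obtain p where ha: "nbhd V E a = {u,p}" and pu: "p \<noteq> u" using nb2[OF da2 Eau] by blast
      have "E a p" using ha mem_nb by blast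
      then have pw: "p \<noteq> w" and pv: "p \<noteq> v" and pa: "p \<noteq> a" using nEaw nEav Eirr by auto
      show False by (rule cda2[OF hu hv dw ha]) (use D1 pu pw pv pa in auto)
    qed
    moreover have "\<not> deg V E a \<ge> 4"
    proof
      assume "deg V E a \<ge> 4"
      show False by (rule da4[OF hu hv hw _ _ _ _ _ _ _ _ _ _ _ _ _ _ _ \<open>deg V E a \<ge> 4\<close>]) (use D1 in auto)
    qed
    ultimately show ?thesis by linarith
  qed
  have db2: "deg V E b = 2"
  proof -
    have "\<not> deg V E b \<ge> 3"
    proof
      assume "deg V E b \<ge> 3"
      show False by (rule f54[OF hu hv hw _ _ _ _ _ _ _ _ _ _ _ _ _ _ _ _ \<open>deg V E b \<ge> 3\<close>]) (use D1 da3 in auto)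
    qed
    then show ?thesis using dmin[OF bV] by linarith
  qed
  have dc2: "deg V E c = 2"
  proof -
    have hw': "nbhd V E w = {v,c,b}" using hw by (simp add: insert_commute)
    have "\<not> deg V E c \<ge> 3"
    proof
      assume "deg V E c \<ge> 3"
      show False by (rule f54[OF hu hv hw' _ _ _ _ _ _ _ _ _ _ _ _ _ _ _ _ \<open>deg V E c \<ge> 3\<close>]) (use D1 da3 in auto)
    qed
    then show ?thesis using dmin[OF cV] by linarith
  qed
  obtain a1 a2 where ha: "nbhd V E a = {u,a1,a2}" and a1u: "a1 \<noteq> u" and a2u: "a2 \<noteq> u" and a12: "a1 \<noteq> a2"
    using nb3[OF da3 Eau] by blast
  have Eaa1: "E a a1" and Eaa2: "E a a2" using ha mem_nb by blast+
  have a1V: "a1 \<in> V" and a2V: "a2 \<in> V" using nbV[OF ha] by auto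
  have a1a: "a1 \<noteq> a" and a2a: "a2 \<noteq> a" using Eaa1 Eaa2 Eirr by blast+
  have a1w: "a1 \<noteq> w" and a2w: "a2 \<noteq> w" using Eaa1 Eaa2 nEaw by blast+
  have a1v: "a1 \<noteq> v" and a2v: "a2 \<noteq> v" using Eaa1 Eaa2 nEav by blast+
  note D2 = D1 a1u a2u a12 a1a a2a a1w a2w a1v a2v
  have da1: "deg V E a1 = 2"
  proof -
    have "\<not> deg V E a1 \<ge> 3"
    proof
      assume "deg V E a1 \<ge> 3"
      show False by (rule f54[OF hv hu ha _ _ _ _ _ _ _ _ _ _ _ _ _ _ _ _ \<open>deg V E a1 \<ge> 3\<close>]) (use D2 dw in auto)
    qed
    then show ?thesis using dmin[OF a1V] by linarith
  qed
  have da2: "deg V E a2 = 2"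
  proof -
    have ha': "nbhd V E a = {u,a2,a1}" using ha by (simp add: insert_commute)
    have "\<not> deg V E a2 \<ge> 3"
    proof
      assume "deg V E a2 \<ge> 3"
      show False by (rule f54[OF hv hu ha' _ _ _ _ _ _ _ _ _ _ _ _ _ _ _ _ \<open>deg V E a2 \<ge> 3\<close>]) (use D2 dw in auto)
    qed
    then show ?thesis using dmin[OF a2V] by linarith
  qed
  have Ebw: "E b w" and Ecw: "E c w" using Ewb Ewc Esym by blast+
  have nEab: "\<not> E a b"
  proof
    assume "E a b"
    then have hb: "nbhd V E b = {w,a}" using nb2'[OF db2 Ebw _ aw[THEN not_sym]] Esym by blast
    show False by (rule cab[OF hv hb dw da3]) (use D1 in auto)
  qed
  have nEac: "\<not> E a c"
  proof
    assume "E a c"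
    then have hc: "nbhd V E c = {w,a}" using nb2'[OF dc2 Ecw _ aw[THEN not_sym]] Esym by blast
    show False by (rule cab[OF hv hc dw da3]) (use D1 in auto)
  qed
  have a1b: "a1 \<noteq> b" and a1c: "a1 \<noteq> c" and a2b: "a2 \<noteq> b" and a2c: "a2 \<noteq> c"
    using Eaa1 Eaa2 nEab nEac by auto
  note D3 = D2 a1b a1c a2b a2c
  have Ea1a: "E a1 a" and Ea2a: "E a2 a" using Eaa1 Eaa2 Esym by blast+
  obtain A1 where ha1: "nbhd V E a1 = {a,A1}" and A1a: "A1 \<noteq> a" using nb2[OF da1 Ea1a] by blast
  obtain A2 where ha2: "nbhd V E a2 = {a,A2}" and A2a: "A2 \<noteq> a" using nb2[OF da2 Ea2a] by blast
  have Ea1A1: "E a1 A1" and Ea2A2: "E a2 A2" using ha1 ha2 mem_nb by blast+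
  have A1v: "A1 \<noteq> v"
  proof
    assume "A1 = v"
    then have "E v a1" using Ea1A1 Esym by simp
    then have "a1 \<in> {u,w}" using hv mem_nb by blast
    then show False using a1u a1w by auto
  qed
  have A2v: "A2 \<noteq> v"
  proof
    assume "A2 = v"
    then have "E v a2" using Ea2A2 Esym by simp
    then have "a2 \<in> {u,w}" using hv mem_nb by blast
    then show False using a2u a2w by auto
  qed
  have A1bc: "A1 = b \<or> A1 = c"
  proof (rule ccontr)
    assume "\<not> (A1 = b \<or> A1 = c)"
    then have "A1 \<noteq> b" "A1 \<noteq> c" by auto
    show False by (rule close[OF hu hw ha1]) (use D3 da3 A1v A1a \<open>A1 \<noteq> b\<close> \<open>A1 \<noteq> c\<close> in auto)
  qed
  have A2bc: "A2 = b \<or> A2 = c"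
  proof (rule ccontr)
    assume "\<not> (A2 = b \<or> A2 = c)"
    then have "A2 \<noteq> b" "A2 \<noteq> c" by auto
    show False by (rule close[OF hu hw ha2]) (use D3 da3 A2v A2a \<open>A2 \<noteq> b\<close> \<open>A2 \<noteq> c\<close> in auto)
  qed
  have A12: "A1 \<noteq> A2"
  proof
    assume eq: "A1 = A2"
    define t where "t = A1"
    have tbc: "t = b \<or> t = c" using A1bc t_def by simp
    have dt: "deg V E t = 2" using tbc db2 dc2 by auto
    have Etw: "E t w" using tbc Ebw Ecw by auto
    have Eta1: "E t a1" using Ea1A1 Esym t_def by blast
    have Eta2: "E t a2" using Ea2A2 Esym t_def eq by blast
    have sub: "{w,a1,a2} \<subseteq> nbhd V E t" using Etw Eta1 Eta2 mem_nb by blast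
    have "card {w,a1,a2} = 3" using a1w a2w a12 by auto
    moreover have "card {w,a1,a2} \<le> card (nbhd V E t)" by (rule card_mono[OF fin_nb sub])
    ultimately show False using dt by (simp add: deg_def)
  qed
  have "(A1 = b \<and> A2 = c) \<or> (A1 = c \<and> A2 = b)" using A1bc A2bc A12 by auto
  then show ?thesis
  proof
    assume h: "A1 = b \<and> A2 = c"
    have Eba1: "E b a1" using Ea1A1 h Esym by blast
    have Eca2: "E c a2" using Ea2A2 h Esym by blast
    have hb: "nbhd V E b = {w,a1}" by (rule nb2'[OF db2 Ebw Eba1 a1w[THEN not_sym]])
    have hc: "nbhd V E c = {w,a2}" by (rule nb2'[OF dc2 Ecw Eca2 a2w[THEN not_sym]])
    have ha1': "nbhd V E a1 = {a,b}" using ha1 h by simp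
    have ha2': "nbhd V E a2 = {a,c}" using ha2 h by simp
    show ?thesis by (rule book_final[OF conn hu hv hw ha hb hc ha1' ha2']) (use D3 in auto)
  next
    assume h: "A1 = c \<and> A2 = b"
    have Eba2: "E b a2" using Ea2A2 h Esym by blast
    have Eca1: "E c a1" using Ea1A1 h Esym by blast
    have hb: "nbhd V E b = {w,a2}" by (rule nb2'[OF db2 Ebw Eba2 a2w[THEN not_sym]])
    have hc: "nbhd V E c = {w,a1}" by (rule nb2'[OF dc2 Ecw Eca1 a1w[THEN not_sym]])
    have ha': "nbhd V E a = {u,a2,a1}" using ha by (simp add: insert_commute)
    have ha1': "nbhd V E a2 = {a,b}" using ha2 h by simp
    have ha2': "nbhd V E a1 = {a,c}" using ha1 h by simp
    show ?thesis by (rule book_final[OF conn hu hv hw ha' hb hc ha1' ha2']) (use D3 in auto)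
  qed
qed

end

theorem mainTheorem11:
  fixes V :: "'a set" and E :: "'a \<Rightarrow> 'a \<Rightarrow> bool"
  assumes "simple_graph V E"
    and "connected_graph V E"
    and "card V \<ge> 3"
    and "min_degree V E = 2"
    and "spectral_eps V E = 1/2"
    and "u \<in> V" and "v \<in> V" and "w \<in> V"
    and "u \<noteq> v" and "v \<noteq> w" and "u \<noteq> w"
    and "E u v" and "E v w"
    and "deg V E u = 2" and "deg V E v = 2" and "deg V E w = 3"
  shows "graph_iso V E (book_V 3) (book_E 3)"
proof -
  have fin: "finite V" using assms(1) by (simp add: simple_graph_def)
  have dmin: "\<And>z. z \<in> V \<Longrightarrow> deg V E z \<ge> 2"
  proof -
    fix z assume z: "z \<in> V"
    have "Min (deg V E ` V) \<le> deg V E z" using fin z by (intro Min_le) auto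
    then show "deg V E z \<ge> 2" using assms(4) by (simp add: min_degree_def)
  qed
  have st: "setting V E"
    unfolding setting_def setting_axioms_def grph_def
    using assms(1,5,6) dmin by (auto intro: less_le_trans[of 0 2])
  show ?thesis
    by (rule setting.main_local[OF st assms(2) assms(9,10,11,12,13,14,15,16)])
qed

end
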